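(* Let $\gamma\in(0,1)$, $\mu\in(0,\infty)\setminus\{1\}$. Let $g$ be a concave traveling wave with compact nonempty support and speed $v$, normalized so that $\sup\{x:g(x)>0\}=0$. Let $s=\sup\{\xi:\sup_x\Phi_\xi[g](x)\ge\gamma\}$. Then $v>0$, and $$v=\begin{cases}\dfrac{1-\gamma-\mu s}{1-\mu} & \text{if } v\le s,\\[2mm] 1-\gamma & \text{if } v>s.\end{cases}$$
   Context: Let $\pi(x)=x$ if $x\ge0$ and $\pi(x)=-\infty$ otherwise. Write $x_+=\max(x,0)$ and use $\sup\emptyset=-\infty$. Define $\Phi_\xi[h](x)=1-\gamma-\mu(\xi-x)_++\sup_y(h(y)-|x-y|)$. The dynamics is defined for $n\ge1$ by: - $p_n(x)=\pi[1-\gamma+\sup_y(g_{n-1}(y)-\min(1,\mu)(x-y)_+)]$; - $s_n=\sup\{x:p_n(x)\ge\gamma\}$; - $g_n=\pi\circ\Phi_{s_n}[g_{n-1}]$. A traveling wave with speed $v$ is a $g$ with $g_0=g\Rightarrow g_n(x)=g(x-nv)$ for all $n,x$. The support is $\{g\ge0\}$. *)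

theory Defs
  imports "HOL-Analysis.Analysis" "HOL-Library.Extended_Real"
begin

text \<open>Functions take values in the extended reals; the paper's functions take values
in the reals together with minus infinity. Suprema are taken in ereal, so the supremum
of the empty set is minus infinity.\<close>

definition piE :: "ereal \<Rightarrow> ereal" where
  "piE x = (if x \<ge> 0 then x else -\<infinity>)"

definition Phi :: "real \<Rightarrow> real \<Rightarrow> ereal \<Rightarrow> (real \<Rightarrow> ereal) \<Rightarrow> real \<Rightarrow> ereal" where
  "Phi \<gamma> \<mu> \<xi> h x =
     ereal (1 - \<gamma>) - ereal \<mu> * max (\<xi> - ereal x) 0
     + (SUP y. h y - ereal \<bar>x - y\<bar>)"

definition pfun :: "real \<Rightarrow> real \<Rightarrow> (real \<Rightarrow> ereal) \<Rightarrow> real \<Rightarrow> ereal" where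
  "pfun \<gamma> \<mu> h x = piE (ereal (1 - \<gamma>) + (SUP y. h y - ereal (min 1 \<mu> * max (x - y) 0)))"

definition sfun :: "real \<Rightarrow> real \<Rightarrow> (real \<Rightarrow> ereal) \<Rightarrow> ereal" where
  "sfun \<gamma> \<mu> h = Sup (ereal ` {x. pfun \<gamma> \<mu> h x \<ge> ereal \<gamma>})"

primrec gseq :: "real \<Rightarrow> real \<Rightarrow> (real \<Rightarrow> ereal) \<Rightarrow> nat \<Rightarrow> real \<Rightarrow> ereal" where
  "gseq \<gamma> \<mu> g0 0 = g0"
| "gseq \<gamma> \<mu> g0 (Suc n) =
     (\<lambda>x. piE (Phi \<gamma> \<mu> (sfun \<gamma> \<mu> (gseq \<gamma> \<mu> g0 n)) (gseq \<gamma> \<mu> g0 n) x))"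

definition traveling_wave :: "real \<Rightarrow> real \<Rightarrow> (real \<Rightarrow> ereal) \<Rightarrow> real \<Rightarrow> bool" where
  "traveling_wave \<gamma> \<mu> g v \<longleftrightarrow> (\<forall>n x. gseq \<gamma> \<mu> g n x = g (x - real n * v))"

definition concave_ext :: "(real \<Rightarrow> ereal) \<Rightarrow> bool" where
  "concave_ext g \<longleftrightarrow> convex {(x, r::real). ereal r \<le> g x}"

definition support :: "(real \<Rightarrow> ereal) \<Rightarrow> real set" where
  "support g = {x. g x \<ge> 0}"

end

theory Submission imports Defs begin

lemma term_le:
  fixes a b :: real and e :: ereal
  assumes "e \<noteq> \<infinity>" "e \<noteq> -\<infinity> \<Longrightarrow> a + real_of_ereal e - b \<le> c + real_of_ereal e - d"
  shows "ereal a + (e - ereal b) \<le> ereal c + (e - ereal d)"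
  using assms by (cases e) auto

lemma SUP_Phi_eq:
  fixes \<gamma> \<mu> \<xi> :: real and g :: "real \<Rightarrow> ereal"
  assumes "0 < \<mu>" "\<forall>x. g x \<noteq> \<infinity>"
  shows "(SUP x. Phi \<gamma> \<mu> (ereal \<xi>) g x) =
     ereal (1 - \<gamma>) + (SUP y. g y - ereal (min 1 \<mu> * max (\<xi> - y) 0))"
proof (rule antisym)
  have c: "Phi \<gamma> \<mu> (ereal \<xi>) g x = (SUP y. ereal (1 - \<gamma> - \<mu> * max (\<xi> - x) 0) + (g y - ereal \<bar>x - y\<bar>))" for x
    unfolding Phi_def
    by (subst SUP_ereal_add_right) (auto simp: max_def)
  show "(SUP x. Phi \<gamma> \<mu> (ereal \<xi>) g x) \<le> ereal (1 - \<gamma>) + (SUP y. g y - ereal (min 1 \<mu> * max (\<xi> - y) 0))"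
  proof (rule SUP_least)
    fix x
    show "Phi \<gamma> \<mu> (ereal \<xi>) g x \<le> ereal (1 - \<gamma>) + (SUP y. g y - ereal (min 1 \<mu> * max (\<xi> - y) 0))"
      unfolding c
    proof (rule SUP_least)
      fix y
      have "ereal (1 - \<gamma> - \<mu> * max (\<xi> - x) 0) + (g y - ereal \<bar>x - y\<bar>)
          \<le> ereal (1 - \<gamma>) + (g y - ereal (min 1 \<mu> * max (\<xi> - y) 0))"
      proof (rule term_le)
        show "g y \<noteq> \<infinity>" using assms by auto
        have "min 1 \<mu> * max (\<xi> - y) 0 \<le> \<mu> * max (\<xi> - x) 0 + \<bar>x - y\<bar>"
        proof -
          have "min 1 \<mu> * max (\<xi> - y) 0 \<le> min 1 \<mu> * (max (\<xi> - x) 0 + \<bar>x - y\<bar>)"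
            using assms(1) by (intro mult_left_mono) (auto simp: max_def)
          also have "\<dots> \<le> \<mu> * max (\<xi> - x) 0 + \<bar>x - y\<bar>"
          proof (cases "\<mu> \<le> 1")
            case True
            have "\<mu> * \<bar>x - y\<bar> \<le> 1 * \<bar>x - y\<bar>" using True by (intro mult_right_mono) auto
            then show ?thesis using True by (simp add: distrib_left min_def)
          next
            case False
            have "1 * max (\<xi> - x) 0 \<le> \<mu> * max (\<xi> - x) 0" using False by (intro mult_right_mono) auto
            then show ?thesis using False by (simp add: min_def)
          qed
          finally show ?thesis .
        qed
        then show "1 - \<gamma> - \<mu> * max (\<xi> - x) 0 + real_of_ereal (g y) - \<bar>x - y\<bar>
            \<le> 1 - \<gamma> + real_of_ereal (g y) - min 1 \<mu> * max (\<xi> - y) 0" by linarith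
      qed
      also have "\<dots> \<le> ereal (1 - \<gamma>) + (SUP y. g y - ereal (min 1 \<mu> * max (\<xi> - y) 0))"
        by (intro add_left_mono SUP_upper) auto
      finally show "ereal (1 - \<gamma> - \<mu> * max (\<xi> - x) 0) + (g y - ereal \<bar>x - y\<bar>)
          \<le> ereal (1 - \<gamma>) + (SUP y. g y - ereal (min 1 \<mu> * max (\<xi> - y) 0))" .
    qed
  qed
  show "ereal (1 - \<gamma>) + (SUP y. g y - ereal (min 1 \<mu> * max (\<xi> - y) 0)) \<le> (SUP x. Phi \<gamma> \<mu> (ereal \<xi>) g x)"
  proof (subst SUP_ereal_add_right[symmetric], simp, simp, rule SUP_least)
    fix y
    define x where "x = (if \<mu> \<le> 1 \<or> \<xi> \<le> y then y else \<xi>)"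
    have "ereal (1 - \<gamma>) + (g y - ereal (min 1 \<mu> * max (\<xi> - y) 0))
       \<le> ereal (1 - \<gamma> - \<mu> * max (\<xi> - x) 0) + (g y - ereal \<bar>x - y\<bar>)"
    proof (rule term_le)
      show "g y \<noteq> \<infinity>" using assms by auto
      show "1 - \<gamma> + real_of_ereal (g y) - min 1 \<mu> * max (\<xi> - y) 0
          \<le> 1 - \<gamma> - \<mu> * max (\<xi> - x) 0 + real_of_ereal (g y) - \<bar>x - y\<bar>"
        unfolding x_def using assms(1) by (auto simp: max_def min_def)
    qed
    also have "\<dots> \<le> Phi \<gamma> \<mu> (ereal \<xi>) g x"
      unfolding c by (rule SUP_upper) auto
    also have "\<dots> \<le> (SUP x. Phi \<gamma> \<mu> (ereal \<xi>) g x)" by (rule SUP_upper) auto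
    finally show "ereal (1 - \<gamma>) + (g y - ereal (min 1 \<mu> * max (\<xi> - y) 0)) \<le> (SUP x. Phi \<gamma> \<mu> (ereal \<xi>) g x)" .
  qed
qed

lemma sfun_eq:
  fixes \<gamma> \<mu> :: real and g :: "real \<Rightarrow> ereal"
  assumes "0 < \<gamma>" "0 < \<mu>" "\<forall>x. g x \<noteq> \<infinity>"
  shows "sfun \<gamma> \<mu> g = Sup (ereal ` {\<xi>. (SUP x. Phi \<gamma> \<mu> (ereal \<xi>) g x) \<ge> ereal \<gamma>})"
proof -
  have "pfun \<gamma> \<mu> g \<xi> \<ge> ereal \<gamma> \<longleftrightarrow> (SUP x. Phi \<gamma> \<mu> (ereal \<xi>) g x) \<ge> ereal \<gamma>" for \<xi>
    unfolding SUP_Phi_eq[OF assms(2,3)] pfun_def piE_def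
    using assms(1) by (auto simp: order_trans[of 0 "ereal \<gamma>"])
  then show ?thesis unfolding sfun_def by simp
qed


lemma concave_pt:
  assumes "concave_ext g" "ereal a \<le> g x" "ereal b \<le> g y" "0 \<le> l" "l \<le> 1"
  shows "ereal (l*a + (1-l)*b) \<le> g (l*x + (1-l)*y)"
proof -
  have "l *\<^sub>R (x, a) + (1 - l) *\<^sub>R (y, b) \<in> {(x, r::real). ereal r \<le> g x}"
    using assms(1) unfolding concave_ext_def convex_def
    using assms(2-5) by (intro assms(1)[unfolded concave_ext_def convex_def, rule_format]) auto
  then show ?thesis by simp
qed

theorem lemmaS3p4:
  fixes \<gamma> \<mu> v :: real and g :: "real \<Rightarrow> ereal"
  assumes "0 < \<gamma>" "\<gamma> < 1" "0 < \<mu>" "\<mu> \<noteq> 1"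
    and "\<forall>x. g x \<noteq> \<infinity>"
    and "concave_ext g"
    and "compact (support g)" "support g \<noteq> {}"
    and "traveling_wave \<gamma> \<mu> g v"
    and "Sup (ereal ` {x. g x > 0}) = 0"
  shows "v > 0 \<and>
    (let s = Sup (ereal ` {\<xi>. (SUP x. Phi \<gamma> \<mu> (ereal \<xi>) g x) \<ge> ereal \<gamma>}) in
      (ereal v \<le> s \<longrightarrow> s \<noteq> \<infinity> \<and> v = (1 - \<gamma> - \<mu> * real_of_ereal s) / (1 - \<mu>)) \<and>
      (s < ereal v \<longrightarrow> v = 1 - \<gamma>))"
proof -
  note ginf = assms(5)
  define sf where "sf = sfun \<gamma> \<mu> g"
  have sf_eq: "Sup (ereal ` {\<xi>. (SUP x. Phi \<gamma> \<mu> (ereal \<xi>) g x) \<ge> ereal \<gamma>}) = sf"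
    unfolding sf_def using sfun_eq[OF assms(1,3,5)] by simp
  define G where "G x = (SUP y. g y - ereal \<bar>x - y\<bar>)" for x
  have PhiG: "Phi \<gamma> \<mu> sf g x = ereal (1 - \<gamma>) - ereal \<mu> * max (sf - ereal x) 0 + G x" for x
    unfolding Phi_def G_def by simp
  have W: "g (x - v) = piE (Phi \<gamma> \<mu> sf g x)" for x
    using assms(9) unfolding traveling_wave_def sf_def
    by (metis gseq.simps(1) gseq.simps(2) One_nat_def of_nat_1 mult_1 One_nat_def)
  have vals: "g y = -\<infinity> \<or> 0 \<le> g y" for y
    using W[of "y + v"] by (auto simp: piE_def)
  have Aup: "t \<le> 0" if "g t > 0" for t
  proof -
    have "ereal t \<le> Sup (ereal ` {x. g x > 0})" using that by (intro Sup_upper) auto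
    then show ?thesis using assms(10) by simp
  qed
  have Aclose: "\<exists>t. g t > 0 \<and> - e < t \<and> t \<le> 0" if "e > 0" for e
  proof (rule ccontr)
    assume "\<not> ?thesis"
    then have "\<forall>t. g t > 0 \<longrightarrow> t \<le> -e" using Aup by force
    then have "Sup (ereal ` {x. g x > 0}) \<le> ereal (-e)" by (intro Sup_least) auto
    then show False using assms(10) that by simp
  qed
  obtain t0 where t0: "g t0 > 0" "t0 \<le> 0" using Aclose[of 1] by auto
  have t0r: "g t0 = ereal (real_of_ereal (g t0))" using t0 ginf by (cases "g t0") auto
  have Gnm: "G x \<noteq> -\<infinity>" for x
  proof -
    have "g t0 - ereal \<bar>x - t0\<bar> \<le> G x" unfolding G_def by (rule SUP_upper) auto
    then show ?thesis using t0r by (metis ereal_minus(1) MInfty_neq_ereal(1) ereal_infty_less_eq(2))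
  qed
  have Gnp: "G x \<noteq> \<infinity>" for x
  proof
    assume "G x = \<infinity>"
    then have "Phi \<gamma> \<mu> sf g x = \<infinity>" unfolding PhiG by simp
    then have "g (x - v) = \<infinity>" using W[of x] by (simp add: piE_def)
    then show False using ginf by auto
  qed
  define Gr where "Gr x = real_of_ereal (G x)" for x
  have GGr: "G x = ereal (Gr x)" for x using Gnm[of x] Gnp[of x] unfolding Gr_def by (cases "G x") auto
  have GLip: "Gr x \<le> Gr y + \<bar>x - y\<bar>" for x y
  proof -
    have "G x \<le> G y + ereal \<bar>x - y\<bar>" unfolding G_def[of x]
    proof (rule SUP_least)
      fix z
      have "\<bar>x - z\<bar> \<ge> \<bar>y - z\<bar> - \<bar>x - y\<bar>" by linarith
      then have "g z - ereal \<bar>x - z\<bar> \<le> (g z - ereal \<bar>y - z\<bar>) + ereal \<bar>x - y\<bar>"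
        by (cases "g z") auto
      also have "\<dots> \<le> G y + ereal \<bar>x - y\<bar>" unfolding G_def by (intro add_right_mono SUP_upper) auto
      finally show "g z - ereal \<bar>x - z\<bar> \<le> G y + ereal \<bar>x - y\<bar>" .
    qed
    then show ?thesis unfolding GGr by simp
  qed
  have sfnp: "sf \<noteq> \<infinity>"
  proof
    assume "sf = \<infinity>"
    then have "Phi \<gamma> \<mu> sf g (t0 + v) = -\<infinity>" unfolding PhiG GGr using assms(3) by simp
    then have "g t0 = -\<infinity>" using W[of "t0 + v"] by (simp add: piE_def)
    then show False using t0 by simp
  qed
  define q where "q x = (if sf = -\<infinity> then 0 else \<mu> * max (real_of_ereal sf - x) 0)" for x
  define \<phi> where "\<phi> x = 1 - \<gamma> - q x + Gr x" for x
  have Phi\<phi>: "Phi \<gamma> \<mu> sf g x = ereal (\<phi> x)" for x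
    unfolding PhiG GGr using sfnp by (cases sf) (auto simp: \<phi>_def q_def max_def)
  have W2: "g (x - v) = piE (ereal (\<phi> x))" for x using W Phi\<phi> by simp
  have qLip: "\<bar>q x - q y\<bar> \<le> \<mu> * \<bar>x - y\<bar>" for x y
  proof -
    have m: "\<bar>max (a - x) 0 - max (a - y) 0\<bar> \<le> \<bar>x - y\<bar>" for a by (auto simp: max_def abs_if)
    have "\<bar>\<mu> * max (a - x) 0 - \<mu> * max (a - y) 0\<bar> \<le> \<mu> * \<bar>x - y\<bar>" for a
    proof -
      have "\<bar>\<mu> * max (a - x) 0 - \<mu> * max (a - y) 0\<bar> = \<mu> * \<bar>max (a - x) 0 - max (a - y) 0\<bar>"
        using assms(3) by (simp add: right_diff_distrib[symmetric] abs_mult)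
      also have "\<dots> \<le> \<mu> * \<bar>x - y\<bar>" using m assms(3) by (intro mult_left_mono) auto
      finally show ?thesis .
    qed
    then show ?thesis using assms(3) by (auto simp: q_def)
  qed
  have \<phi>Lip: "\<phi> x \<le> \<phi> y + (1 + \<mu>) * \<bar>x - y\<bar>" for x y
    using qLip[of x y] GLip[of x y] unfolding \<phi>_def by (simp add: distrib_right)
  have right: "\<phi> x \<le> 0" if "x > v" for x
  proof (rule ccontr)
    assume "\<not> \<phi> x \<le> 0"
    then have "g (x - v) > 0" using W2[of x] by (simp add: piE_def)
    then show False using Aup[of "x - v"] that by simp
  qed
  have left: "\<exists>x. v - e < x \<and> x \<le> v \<and> \<phi> x > 0" if epos: "e > 0" for e
  proof -
    obtain t where t: "g t > 0" "- e < t" "t \<le> 0" using Aclose[OF epos] by auto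
    have "\<phi> (t + v) > 0"
    proof (rule ccontr)
      assume "\<not> \<phi> (t + v) > 0"
      then have "g t \<le> 0" using W2[of "t + v"] by (auto simp: piE_def)
      then show False using t by simp
    qed
    then show ?thesis using t by (intro exI[of _ "t + v"]) auto
  qed
  have \<phi>v: "\<phi> v = 0"
  proof (rule ccontr)
    assume ne: "\<phi> v \<noteq> 0"
    show False
    proof (cases "\<phi> v < 0")
      case True
      define e where "e = - \<phi> v / (1 + \<mu>)"
      have e: "e > 0" "e * (1 + \<mu>) = - \<phi> v" using True assms(3) by (auto simp: e_def divide_neg_pos)
      obtain x where x: "v - e < x" "x \<le> v" "\<phi> x > 0" using left[OF e(1)] by auto
      have "\<phi> x \<le> \<phi> v + (1 + \<mu>) * \<bar>x - v\<bar>" by (rule \<phi>Lip)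
      moreover have "(1 + \<mu>) * \<bar>x - v\<bar> \<le> (1 + \<mu>) * e" using x assms(3) by (intro mult_left_mono) auto
      ultimately show False using x e by (simp add: algebra_simps)
    next
      case False
      then have pos: "\<phi> v > 0" using ne by simp
      define e where "e = \<phi> v / (2 * (1 + \<mu>))"
      have e: "e > 0" "e * (1 + \<mu>) * 2 = \<phi> v" using pos assms(3) by (auto simp: e_def field_simps)
      have "\<phi> v \<le> \<phi> (v + e) + (1 + \<mu>) * \<bar>v - (v + e)\<bar>" by (rule \<phi>Lip)
      moreover have "\<phi> (v + e) \<le> 0" using right e by simp
      ultimately show False using e pos by (simp add: algebra_simps)
    qed
  qed
  have g0: "g 0 = 0" using W2[of v] \<phi>v by (simp add: piE_def)
  have gpos: "g y = -\<infinity>" if "y > 0" for y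
  proof (rule ccontr)
    assume "g y \<noteq> -\<infinity>"
    then have gy: "ereal 0 \<le> g y" using vals[of y] by (metis zero_ereal_def)
    define l where "l = y / (2 * (y - t0))"
    have yt: "y - t0 > 0" using that t0(2) by simp
    have l1: "l * (y - t0) = y / 2" using yt unfolding l_def by (simp add: field_simps)
    have l3: "l * t0 + (1 - l) * y = y / 2" using l1 by (simp add: algebra_simps)
    have l: "0 < l" "l \<le> 1"
      using yt that t0(2) by (auto simp: l_def field_simps)
    have "ereal (l * real_of_ereal (g t0) + (1 - l) * 0) \<le> g (l * t0 + (1 - l) * y)"
      using t0r l by (intro concave_pt[OF assms(6) _ gy]) auto
    then have le: "ereal (l * real_of_ereal (g t0)) \<le> g (y / 2)" using l3 by simp
    have r0: "real_of_ereal (g t0) > 0" using t0(1) t0r by (metis ereal_less(2))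
    have "ereal 0 < ereal (l * real_of_ereal (g t0))" using l r0 by simp
    then have "ereal 0 < g (y / 2)" using le by (rule order_less_le_trans)
    then have "g (y / 2) > 0" by (metis zero_ereal_def)
    then show False using Aup[of "y/2"] that by simp
  qed
  have Gr0: "Gr x = Gr 0 - x" if "x \<ge> 0" for x
  proof -
    have "G x \<le> ereal (Gr 0 - x)" unfolding G_def[of x]
    proof (rule SUP_least)
      fix y
      show "g y - ereal \<bar>x - y\<bar> \<le> ereal (Gr 0 - x)"
      proof (cases "g y = -\<infinity>")
        case True
        then show ?thesis by simp
      next
        case False
        then obtain r where r: "g y = ereal r" using ginf by (cases "g y") auto
        have "y \<le> 0" using gpos False by (meson not_le)
        have "g y - ereal \<bar>0 - y\<bar> \<le> G 0" unfolding G_def by (rule SUP_upper) auto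
        then have "r - \<bar>0 - y\<bar> \<le> Gr 0" using r by (simp add: GGr)
        then show ?thesis using r \<open>y \<le> 0\<close> that by simp
      qed
    qed
    then have "Gr x \<le> Gr 0 - x" by (simp add: GGr)
    moreover have "Gr 0 \<le> Gr x + \<bar>0 - x\<bar>" by (rule GLip)
    ultimately show ?thesis using that by simp
  qed
  have Gr0nn: "Gr 0 \<ge> 0"
  proof -
    have "g 0 - ereal \<bar>0 - 0\<bar> \<le> G 0" unfolding G_def by (rule SUP_upper) auto
    then show ?thesis using g0 by (simp add: GGr)
  qed
  have "bounded (support g)" using assms(7) by (rule compact_imp_bounded)
  then obtain B where B: "\<And>y. y \<in> support g \<Longrightarrow> \<bar>y\<bar> \<le> B" unfolding bounded_real by auto
  have gle: "g y \<le> ereal (Gr 0 + B)" for y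
  proof (cases "g y = -\<infinity>")
    case False
    then obtain r where r: "g y = ereal r" using ginf by (cases "g y") auto
    have "0 \<le> g y" using vals[of y] False by simp
    then have "\<bar>y\<bar> \<le> B" using B unfolding support_def by auto
    have "g y - ereal \<bar>0 - y\<bar> \<le> G 0" unfolding G_def by (rule SUP_upper) auto
    then have "r - \<bar>y\<bar> \<le> Gr 0" using r by (simp add: GGr)
    then show ?thesis using r \<open>\<bar>y\<bar> \<le> B\<close> by simp
  qed simp
  define M where "M = Sup (range g)"
  have M1: "M \<le> ereal (Gr 0 + B)" unfolding M_def using gle by (intro Sup_least) auto
  have M2: "g t0 \<le> M" unfolding M_def by (rule Sup_upper) auto
  define Mr where "Mr = real_of_ereal M"
  have MMr: "M = ereal Mr" using M1 M2 t0 unfolding Mr_def by (cases M) auto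
  have Mrpos: "Mr > 0" using M2 t0(1) MMr by (metis ereal_less(2) order_less_le_trans zero_ereal_def)
  have GleM: "Gr x \<le> Mr" for x
  proof -
    have "G x \<le> M" unfolding G_def
    proof (rule SUP_least)
      fix y
      have "g y - ereal \<bar>x - y\<bar> \<le> g y" by (cases "g y") auto
      also have "g y \<le> M" unfolding M_def by (rule Sup_upper) auto
      finally show "g y - ereal \<bar>x - y\<bar> \<le> M" .
    qed
    then show ?thesis by (simp add: GGr MMr)
  qed
  have approx: "\<exists>y. g y > ereal (Mr - e)" if epos: "e > 0" for e
  proof (rule ccontr)
    assume "\<not> ?thesis"
    then have "M \<le> ereal (Mr - e)" unfolding M_def by (intro Sup_least) (auto simp: not_less)
    then show False using epos MMr by simp
  qed
  have vpos: "v > 0"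
  proof (rule ccontr)
    assume "\<not> v > 0"
    then have vle: "v \<le> 0" by simp
    have \<phi>0: "\<phi> 0 \<le> 0"
      using right[of 0] \<phi>v vle by (cases "v = 0") auto
    obtain sr where sr: "sf = ereal sr" "sr > 0"
    proof (cases sf)
      case (real r)
      show ?thesis
      proof (cases "r > 0")
        case True then show ?thesis using that real by auto
      next
        case False
        then have "q 0 = 0" using real by (simp add: q_def max_def)
        then show ?thesis using \<phi>0 Gr0nn assms(2) by (simp add: \<phi>_def)
      qed
    next
      case MInf
      then have "q 0 = 0" by (simp add: q_def)
      then show ?thesis using \<phi>0 Gr0nn assms(2) by (simp add: \<phi>_def)
    qed (use sfnp in auto)
    have q: "q x = \<mu> * (sr - x)" if "x \<le> 0" for x
      using sr that by (simp add: q_def max_def)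
    have big: "\<mu> * sr \<ge> 1 - \<gamma> + Gr 0" using \<phi>0 q[of 0] by (simp add: \<phi>_def)
    define e where "e = Mr * \<mu> / (2 * (1 + \<mu>))"
    have epos: "e > 0" using Mrpos assms(3) by (simp add: e_def)
    have eM: "e * (1 + \<mu>) = Mr * \<mu> / 2" using assms(3) by (simp add: e_def field_simps)
    have p: "0 < Mr * \<mu>" using Mrpos assms(3) by simp
    have "Mr * \<mu> / 2 < Mr * (1 + \<mu>)" using p Mrpos by (simp add: distrib_left)
    then have "e * (1 + \<mu>) < Mr * (1 + \<mu>)" using eM by simp
    then have eltM: "e < Mr" using assms(3) by (simp add: mult_less_cancel_right)
    obtain y where y: "g y > ereal (Mr - e)" using approx[OF epos] by auto
    have "g y > 0" using y eltM by (metis ereal_less(2) order_le_less_trans diff_gt_0_iff_gt less_imp_le zero_ereal_def)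
    then have yle: "y \<le> 0" by (rule Aup)
    define x where "x = y + v"
    have xle: "x \<le> 0" using yle vle by (simp add: x_def)
    have gyx: "g y = piE (ereal (\<phi> x))" using W2[of x] by (simp add: x_def)
    have "\<phi> x > Mr - e"
    proof (cases "\<phi> x \<ge> 0")
      case True
      then show ?thesis using gyx y by (simp add: piE_def)
    next
      case False
      then show ?thesis using gyx y by (simp add: piE_def)
    qed
    then have A: "Mr - e < 1 - \<gamma> - \<mu> * (sr - x) + Gr x" using q[OF xle] by (simp add: \<phi>_def)
    have B1: "Gr x \<le> Mr" by (rule GleM)
    have B2: "Gr x \<le> Gr 0 - x" using GLip[of x 0] xle by simp
    have C1: "- (\<mu> * x) < e" using A B1 big Gr0nn by (simp add: algebra_simps)
    have mx: "\<mu> * x \<le> 0" using assms(3) xle by (simp add: mult_nonneg_nonpos)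
    have C2: "Mr - e < - x" using A B2 big mx by (simp add: algebra_simps)
    have C3: "- x * \<mu> < e" using C1 by (simp add: mult.commute)
    have "(Mr - e) * \<mu> < - x * \<mu>" using C2 assms(3) by (rule mult_strict_right_mono)
    then have "(Mr - e) * \<mu> < e" using C3 by linarith
    then have "Mr * \<mu> < e * (1 + \<mu>)" by (simp add: algebra_simps)
    then show False using eM Mrpos assms(3) by simp
  qed
  obtain k y0 where k: "0 < k" "k \<le> 1" "y0 < 0" and lin: "\<And>y. y0 \<le> y \<Longrightarrow> y \<le> 0 \<Longrightarrow> g y = ereal (- k * y)"
  proof (cases "sf < ereal v")
    case True
    define x0 where "x0 = (if sf = -\<infinity> then 0 else max 0 (real_of_ereal sf))"
    have x0v: "x0 < v" using True vpos sfnp by (cases sf) (auto simp: x0_def)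
    have qx: "q x = 0" if "x0 \<le> x" for x
      using that sfnp by (cases sf) (auto simp: q_def x0_def max_def split: if_splits)
    have x0nn: "0 \<le> x0" by (simp add: x0_def)
    have \<phi>x: "\<phi> x = 1 - \<gamma> + Gr 0 - x" if "x0 \<le> x" for x
      using qx[OF that] Gr0[of x] that x0nn by (simp add: \<phi>_def)
    have vv: "1 - \<gamma> + Gr 0 = v" using \<phi>x[of v] \<phi>v x0v by simp
    show ?thesis
    proof (rule that[of 1 "x0 - v"])
      fix y assume y: "x0 - v \<le> y" "y \<le> 0"
      have "\<phi> (y + v) = - y" using \<phi>x[of "y + v"] y vv by simp
      then show "g y = ereal (- 1 * y)" using W2[of "y + v"] y by (simp add: piE_def)
    qed (use x0v in auto)
  next
    case False
    then obtain sr where sr: "sf = ereal sr" "v \<le> sr" using sfnp by (cases sf) auto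
    have \<phi>x: "\<phi> x = (1 - \<mu>) * (v - x)" if "0 \<le> x" "x \<le> v" for x
    proof -
      have "q x = \<mu> * (sr - x)" "q v = \<mu> * (sr - v)" using sr that by (auto simp: q_def max_def)
      then show ?thesis using Gr0[of x] Gr0[of v] that vpos \<phi>v by (simp add: \<phi>_def algebra_simps)
    qed
    show ?thesis
    proof (cases "\<mu> < 1")
      case True
      show ?thesis
      proof (rule that[of "1 - \<mu>" "- v"])
        fix y assume y: "- v \<le> y" "y \<le> 0"
        have "\<phi> (y + v) = (1 - \<mu>) * (- y)" using \<phi>x[of "y + v"] y by simp
        moreover have "(1 - \<mu>) * (- y) \<ge> 0" using True y by (simp add: mult_nonneg_nonpos)
        ultimately show "g y = ereal (- (1 - \<mu>) * y)" using W2[of "y + v"] by (simp add: piE_def algebra_simps)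
      qed (use True assms(3) vpos in auto)
    next
      case False
      then have mu1: "\<mu> > 1" using assms(4) by simp
      obtain t where t: "g t > 0" "- v < t" "t \<le> 0" using Aclose[OF vpos] by auto
      have "\<phi> (t + v) = (1 - \<mu>) * (v - (t + v))" using t by (intro \<phi>x) auto
      moreover have "(1 - \<mu>) * (v - (t + v)) \<le> 0" using mu1 t by (simp add: mult_nonpos_nonpos)
      ultimately have "g t = -\<infinity> \<or> g t = 0" using W2[of "t + v"] by (auto simp: piE_def)
      then show ?thesis using t by auto
    qed
  qed
  \<comment> \<open>concavity gives the tangent bound, hence G 0 = 0\<close>
  have tang: "g y \<le> ereal (- k * y)" if "y \<le> 0" for y
  proof (cases "y0 \<le> y")
    case True then show ?thesis using lin that by simp
  next
    case False
    show ?thesis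
    proof (cases "g y = -\<infinity>")
      case False
      then obtain r where r: "g y = ereal r" using ginf by (cases "g y") auto
      define l where "l = y0 / y"
      have yneg: "y < 0" using \<open>\<not> y0 \<le> y\<close> k by simp
      have l: "0 \<le> l" "l \<le> 1" using yneg \<open>\<not> y0 \<le> y\<close> k by (auto simp: l_def field_simps)
      have ly: "l * y + (1 - l) * 0 = y0" using yneg by (simp add: l_def)
      have "ereal (l * r + (1 - l) * 0) \<le> g (l * y + (1 - l) * 0)"
        using r g0 l by (intro concave_pt[OF assms(6)]) auto
      then have "l * r \<le> - k * y0" using ly lin[of y0] k by simp
      then have "(y0 / y) * r \<le> - k * y0" by (simp add: l_def)
      then have "y0 * r / y \<le> - k * y0" by simp
      then have "y0 * r \<ge> - k * y0 * y" using yneg by (simp add: divide_le_eq)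
      then have "r \<le> - k * y" using k(3)
        by (smt (verit) mult.commute mult.left_commute mult_le_cancel_left_neg)
      then show ?thesis using r by simp
    qed simp
  qed
  have Gr00: "Gr 0 = 0"
  proof -
    have "G 0 \<le> ereal 0" unfolding G_def
    proof (rule SUP_least)
      fix y
      show "g y - ereal \<bar>0 - y\<bar> \<le> ereal 0"
      proof (cases "y \<le> 0")
        case True
        have "g y - ereal \<bar>0 - y\<bar> \<le> ereal (- k * y) - ereal \<bar>0 - y\<bar>"
          using tang[OF True] by (rule ereal_minus_mono) simp
        also have "\<dots> \<le> ereal 0" using True k by (simp add: mult_le_cancel_right1 mult_nonpos_nonpos)
        finally show ?thesis .
      qed (use gpos in simp)
    qed
    then show ?thesis using Gr0nn by (simp add: GGr)
  qed
  have P1: "ereal v \<le> sf \<longrightarrow> sf \<noteq> \<infinity> \<and> v = (1 - \<gamma> - \<mu> * real_of_ereal sf) / (1 - \<mu>)"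
  proof
    assume "ereal v \<le> sf"
    then obtain sr where sr: "sf = ereal sr" "v \<le> sr" using sfnp by (cases sf) auto
    have "q v = \<mu> * (sr - v)" using sr by (simp add: q_def max_def)
    then have "1 - \<gamma> - \<mu> * (sr - v) - v = 0" using \<phi>v Gr0[of v] Gr00 vpos by (simp add: \<phi>_def)
    then have "v * (1 - \<mu>) = 1 - \<gamma> - \<mu> * sr" by (simp add: algebra_simps)
    then show "sf \<noteq> \<infinity> \<and> v = (1 - \<gamma> - \<mu> * real_of_ereal sf) / (1 - \<mu>)"
      using sr assms(4) by (simp add: eq_divide_eq)
  qed
  have P2: "sf < ereal v \<longrightarrow> v = 1 - \<gamma>"
  proof
    assume "sf < ereal v"
    then have "q v = 0" using sfnp by (cases sf) (auto simp: q_def max_def)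
    then show "v = 1 - \<gamma>" using \<phi>v Gr0[of v] Gr00 vpos by (simp add: \<phi>_def)
  qed
  show ?thesis unfolding sf_eq Let_def using vpos P1 P2 by blast
qed

end
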